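(* Let $I\subset[0,+\infty)$ be an open interval, $n\in\mathbb{N}^*$, $\beta\in\{-1,1\}$, $\kappa,\mu\in\,]-1,+\infty[$, $N\ge n$, $\xi\in[0,1]$. Let the noise $\{\varpi(\tau),\tau\ge 0\}$ satisfy (C1) and (C2). Then the mean $E[e_{\varpi}^{\beta T}(t_0)]$, the variance $\mathrm{Var}[e_{\varpi}^{\beta T}(t_0)]$ and the covariance $\mathrm{Cov}[e_{\varpi}^{\beta T_1}(t_0),e_{\varpi}^{\beta T_2}(t_0)]$ (for $T,T_1,T_2>0$) do not depend on $t_0$. If in addition the noise satisfies (C3), then $E[e_{\varpi}^{\beta T}(t_0)]=0$, $\mathrm{Cov}[e_{\varpi}^{\beta T_1}(t_0),e_{\varpi}^{\beta T_2}(t_0)]=0$ and $\mathrm{Var}[e_{\varpi}^{\beta T}(t_0)]=0$.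
   Context: For $a,b>-1$ let $w^{a,b}(t)=t^{b}(1-t)^{a}$, $P_k^{a,b}(t)=\sum_{s=0}^{k}\binom{k+a}{s}\binom{k+b}{k-s}(t-1)^{k-s}t^{s}$ and $\|P_k^{a,b}\|^2=\int_0^1 w^{a,b}(P_k^{a,b})^2$. With $q=N-n$ the Jacobi estimator kernel is $$p^{\beta T}(\tau)=\frac{(-1)^n}{(\beta T)^n}\sum_{i=0}^{q}\frac{P_i^{\mu+n,\kappa+n}(\xi)}{\|P_i^{\mu+n,\kappa+n}\|^2}\frac{d^n}{d\tau^n}\Big[w^{\mu+n,\kappa+n}(\tau)P_i^{\mu+n,\kappa+n}(\tau)\Big],$$ and for $t_0\in I$, $T>0$ with $t_0+\beta T\in I$, the noise error contribution of the Jacobi estimator $\hat D^{\mu,\kappa}_{\beta T,N,\xi}x^{(n)}(t_0)$ is the mean-square integral $e_{\varpi}^{\beta T}(t_0)=\int_0^1 p^{\beta T}(\tau)\varpi(t_0+\beta T\tau)d\tau$. (C1): $\{\varpi(\tau),\tau\ge0\}$ is a continuous parameter stochastic process with finite second moments whose mean value function and covariance kernel are continuous. (C2): for all $t_0$, $s$, $\tau$ with $t_0+s,t_0+\tau\in I$, $E[\varpi(t_0+\tau)]=\sum_{i=0}^{n-1}\nu_i t_0^{k_1(i)}\tau^i+E[\varpi(\tau)]$ and $\mathrm{Cov}[\varpi(t_0+s),\varpi(t_0+\tau)]=\Big(\sum_{i=0}^{n_1}\eta_i t_0^{k_2(i)}\tau^i\Big)\Big(\sum_{i=0}^{n_2}\eta'_i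 t_0^{k_3(i)}s^i\Big)+\mathrm{Cov}[\varpi(s),\varpi(\tau)]$, where $k_1(i),k_2(i),k_3(i)\in\mathbb{N}$, $\nu_i,\eta_i,\eta'_i\in\mathbb{R}$, $n_1,n_2\in\mathbb{N}$ with $\min(n_1,n_2)\le n-1$. (C3): for all $s,\tau\in I$, $E[\varpi(\tau)]=\sum_{i=0}^{n-1}\bar\nu_i\tau^i$ and $\mathrm{Cov}[\varpi(s),\varpi(\tau)]=\Big(\sum_{i=0}^{n_1}\bar\eta_i\tau^i\Big)\Big(\sum_{i=0}^{n_2}\bar\eta'_i s^i\Big)$ with $\bar\nu_i,\bar\eta_i,\bar\eta'_i\in\mathbb{R}$ and $\min(n_1,n_2)\le n-1$. *)

theory Defs
  imports "HOL-Probability.Probability"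
begin

definition jac_w :: "real \<Rightarrow> real \<Rightarrow> real \<Rightarrow> real" where
  "jac_w a b t = t powr b * (1 - t) powr a"

definition jacP :: "nat \<Rightarrow> real \<Rightarrow> real \<Rightarrow> real \<Rightarrow> real" where
  "jacP k a b t = (\<Sum>s = 0..k. ((real k + a) gchoose s) * ((real k + b) gchoose (k - s))
                                * (t - 1) ^ (k - s) * t ^ s)"

definition jac_norm2 :: "nat \<Rightarrow> real \<Rightarrow> real \<Rightarrow> real" where
  "jac_norm2 k a b = set_lebesgue_integral lborel {0..1::real} (\<lambda>t. jac_w a b t * (jacP k a b t)^2)"

definition jac_kernel :: "nat \<Rightarrow> nat \<Rightarrow> real \<Rightarrow> real \<Rightarrow> real \<Rightarrow> real \<Rightarrow> real \<Rightarrow> real" where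
  "jac_kernel n N \<mu> \<kappa> \<xi> h \<tau> =
     (-1) ^ n / h ^ n *
     (\<Sum>i = 0..N - n. jacP i (\<mu> + real n) (\<kappa> + real n) \<xi> / jac_norm2 i (\<mu> + real n) (\<kappa> + real n)
        * (deriv ^^ n) (\<lambda>t. jac_w (\<mu> + real n) (\<kappa> + real n) t * jacP i (\<mu> + real n) (\<kappa> + real n) t) \<tau>)"

definition Ex :: "'a measure \<Rightarrow> ('a \<Rightarrow> real) \<Rightarrow> real" where
  "Ex M Y = (\<integral>x. Y x \<partial>M)"

definition Cv :: "'a measure \<Rightarrow> ('a \<Rightarrow> real) \<Rightarrow> ('a \<Rightarrow> real) \<Rightarrow> real" where
  "Cv M Y Z = (\<integral>x. (Y x - Ex M Y) * (Z x - Ex M Z) \<partial>M)"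

definition Vr :: "'a measure \<Rightarrow> ('a \<Rightarrow> real) \<Rightarrow> real" where
  "Vr M Y = Cv M Y Y"

definition L2rv :: "'a measure \<Rightarrow> ('a \<Rightarrow> real) \<Rightarrow> bool" where
  "L2rv M Y \<longleftrightarrow> Y \<in> borel_measurable M \<and> integrable M (\<lambda>x. (Y x)^2)"

text \<open>Mean-square integral of tau |-> f(tau) X(tau) over [0,1], in the (weak / Pettis) sense
  in the Hilbert space L^2(M): Y has finite second moment and E[Y Z] = int_0^1 f(tau) E[X(tau) Z] dtau
  for every Z of finite second moment.\<close>
definition ms_integral :: "'a measure \<Rightarrow> (real \<Rightarrow> real) \<Rightarrow> (real \<Rightarrow> 'a \<Rightarrow> real) \<Rightarrow> ('a \<Rightarrow> real) \<Rightarrow> bool" where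
  "ms_integral M f X Y \<longleftrightarrow> L2rv M Y \<and>
     (\<forall>Z. L2rv M Z \<longrightarrow>
        set_integrable lborel {0..1::real} (\<lambda>\<tau>. f \<tau> * Ex M (\<lambda>x. X \<tau> x * Z x)) \<and>
        Ex M (\<lambda>x. Y x * Z x) = set_lebesgue_integral lborel {0..1::real} (\<lambda>\<tau>. f \<tau> * Ex M (\<lambda>x. X \<tau> x * Z x)))"

definition jacobi_noise_error ::
  "'a measure \<Rightarrow> (real \<Rightarrow> 'a \<Rightarrow> real) \<Rightarrow> nat \<Rightarrow> nat \<Rightarrow> real \<Rightarrow> real \<Rightarrow> real \<Rightarrow> real \<Rightarrow> real \<Rightarrow> real \<Rightarrow> ('a \<Rightarrow> real) \<Rightarrow> bool" where
  "jacobi_noise_error M X n N \<mu> \<kappa> \<xi> \<beta> T t0 Y \<longleftrightarrow>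
     ms_integral M (jac_kernel n N \<mu> \<kappa> \<xi> (\<beta> * T)) (\<lambda>\<tau>. X (t0 + \<beta> * T * \<tau>)) Y"

definition noise_C1 :: "'a measure \<Rightarrow> (real \<Rightarrow> 'a \<Rightarrow> real) \<Rightarrow> bool" where
  "noise_C1 M X \<longleftrightarrow>
     (\<forall>\<tau>\<ge>0. L2rv M (X \<tau>)) \<and>
     continuous_on {0..} (\<lambda>\<tau>. Ex M (X \<tau>)) \<and>
     continuous_on ({0..} \<times> {0..}) (\<lambda>(s, \<tau>). Cv M (X s) (X \<tau>))"

definition noise_C2 :: "'a measure \<Rightarrow> (real \<Rightarrow> 'a \<Rightarrow> real) \<Rightarrow> real set \<Rightarrow> nat \<Rightarrow> bool" where
  "noise_C2 M X I n \<longleftrightarrow>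
     (\<exists>(k1::nat \<Rightarrow> nat) (k2::nat \<Rightarrow> nat) (k3::nat \<Rightarrow> nat) (\<nu>::nat \<Rightarrow> real) (\<eta>::nat \<Rightarrow> real)
        (\<eta>'::nat \<Rightarrow> real) (n1::nat) (n2::nat).
        min n1 n2 \<le> n - 1 \<and>
        (\<forall>t0 s \<tau>. t0 + s \<in> I \<and> t0 + \<tau> \<in> I \<longrightarrow>
           Ex M (X (t0 + \<tau>)) = (\<Sum>i<n. \<nu> i * t0 ^ k1 i * \<tau> ^ i) + Ex M (X \<tau>) \<and>
           Cv M (X (t0 + s)) (X (t0 + \<tau>)) =
             (\<Sum>i\<le>n1. \<eta> i * t0 ^ k2 i * \<tau> ^ i) * (\<Sum>i\<le>n2. \<eta>' i * t0 ^ k3 i * s ^ i)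
             + Cv M (X s) (X \<tau>)))"

definition noise_C3 :: "'a measure \<Rightarrow> (real \<Rightarrow> 'a \<Rightarrow> real) \<Rightarrow> real set \<Rightarrow> nat \<Rightarrow> bool" where
  "noise_C3 M X I n \<longleftrightarrow>
     (\<exists>(\<nu>::nat \<Rightarrow> real) (\<eta>::nat \<Rightarrow> real) (\<eta>'::nat \<Rightarrow> real) (n1::nat) (n2::nat).
        min n1 n2 \<le> n - 1 \<and>
        (\<forall>s\<in>I. \<forall>\<tau>\<in>I.
           Ex M (X \<tau>) = (\<Sum>i<n. \<nu> i * \<tau> ^ i) \<and>
           Cv M (X s) (X \<tau>) = (\<Sum>i\<le>n1. \<eta> i * \<tau> ^ i) * (\<Sum>i\<le>n2. \<eta>' i * s ^ i)))"

end

theory Submission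
  imports Defs
begin


definition phi :: "real \<Rightarrow> real \<Rightarrow> real poly \<Rightarrow> real \<Rightarrow> real" where
  "phi a b Q t = t powr b * (1 - t) powr a * poly Q t"

definition dQ :: "real \<Rightarrow> real \<Rightarrow> real poly \<Rightarrow> real poly" where
  "dQ a b Q = smult b ([:1,-1:] * Q) - smult a ([:0,1:] * Q) + [:0,1,-1:] * pderiv Q"

lemma phi_has_deriv:
  assumes "0 < t" "t < 1"
  shows "(phi a b Q has_real_derivative phi (a-1) (b-1) (dQ a b Q) t) (at t)"
proof -
  have d1: "((\<lambda>t. t powr b) has_real_derivative b * t powr (b-1)) (at t)"
    by (rule has_real_derivative_powr) (use assms in auto)
  have d0: "((\<lambda>t. 1 - t) has_real_derivative -1) (at t)"
    by (auto intro!: derivative_eq_intros)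
  have d2: "((\<lambda>t. (1-t) powr a) has_real_derivative a * (1-t) powr (a-1) * (-1)) (at t)"
    using DERIV_chain2[OF has_real_derivative_powr[of "1-t" a] d0] assms by auto
  have d3: "((\<lambda>t. poly Q t) has_real_derivative poly (pderiv Q) t) (at t)"
    by (rule poly_DERIV)
  have D: "(phi a b Q has_real_derivative
      (b * t powr (b-1) * (1-t) powr a + a * (1-t) powr (a-1) * (-1) * t powr b) * poly Q t
      + poly (pderiv Q) t * (t powr b * (1-t) powr a)) (at t)"
    unfolding phi_def[abs_def] by (intro DERIV_mult d1 d2 d3)
  have e1: "t powr (b-1) = t powr b / t" using assms by (simp add: powr_diff)
  have e2: "(1-t) powr (a-1) = (1-t) powr a / (1-t)" using assms by (simp add: powr_diff)
  have "(b * t powr (b-1) * (1-t) powr a + a * (1-t) powr (a-1) * (-1) * t powr b) * poly Q t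
      + poly (pderiv Q) t * (t powr b * (1-t) powr a) = phi (a-1) (b-1) (dQ a b Q) t"
    unfolding phi_def dQ_def e1 e2 using assms
    by (simp add: field_simps)
  with D show ?thesis by simp
qed

fun Qs :: "real \<Rightarrow> real \<Rightarrow> real poly \<Rightarrow> nat \<Rightarrow> real poly" where
  "Qs a b Q 0 = Q"
| "Qs a b Q (Suc k) = dQ (a - real k) (b - real k) (Qs a b Q k)"

lemma deriv_iter:
  "t \<in> {0<..<1} \<Longrightarrow> (deriv ^^ k) (phi a b Q) t = phi (a - real k) (b - real k) (Qs a b Q k) t"
proof (induction k arbitrary: t)
  case 0
  then show ?case by simp
next
  case (Suc k)
  have "(phi (a - real k) (b - real k) (Qs a b Q k) has_real_derivative
        phi (a - real k - 1) (b - real k - 1) (Qs a b Q (Suc k)) t) (at t)"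
    using phi_has_deriv[of t "a - real k" "b - real k" "Qs a b Q k"] Suc.prems by auto
  then have "((deriv ^^ k) (phi a b Q) has_real_derivative
        phi (a - real k - 1) (b - real k - 1) (Qs a b Q (Suc k)) t) (at t)"
    by (rule has_field_derivative_transform_within_open[where S="{0<..<1}"])
       (use Suc in auto)
  then have "deriv ((deriv ^^ k) (phi a b Q)) t = phi (a - real k - 1) (b - real k - 1) (Qs a b Q (Suc k)) t"
    by (rule DERIV_imp_deriv)
  then show ?case by (simp add: algebra_simps)
qed

lemma poly_meas[measurable]: "poly (P::real poly) \<in> borel_measurable borel"
  using continuous_on_poly[OF continuous_on_id, of UNIV P] by (intro borel_measurable_continuous_onI) (simp add: id_def)

lemma poly_meas'[measurable]: "(\<lambda>x. poly P (f x)) \<in> borel_measurable M" if [measurable]: "f \<in> borel_measurable M" for f :: "_ \<Rightarrow> real"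
  using measurable_compose[OF that poly_meas[of P]] by (simp add: o_def)

lemma w0_int:
  assumes "\<kappa> > -1" "\<mu> > -1"
  shows "set_integrable lborel {0..1::real} (\<lambda>t. t powr \<kappa> * (1-t) powr \<mu>)"
proof -
  have "((\<lambda>t. t powr \<kappa> * (1 - t) powr \<mu>) has_integral Beta (\<kappa>+1) (\<mu>+1)) {0..1}"
    using has_integral_Beta_real[of "\<kappa>+1" "\<mu>+1"] assms by simp
  then have "(\<lambda>t. t powr \<kappa> * (1 - t) powr \<mu>) integrable_on {0..1::real}" by blast
  then have "(\<lambda>t. t powr \<kappa> * (1 - t) powr \<mu>) absolutely_integrable_on {0..1::real}"
    by (rule nonnegative_absolutely_integrable_1) auto
  then have "integrable lebesgue (\<lambda>t. indicator {0..1::real} t *\<^sub>R (t powr \<kappa> * (1 - t) powr \<mu>))"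
    by (simp add: set_integrable_def)
  then show ?thesis unfolding set_integrable_def
    by (subst (asm) integrable_completion) auto
qed

lemma poly_bounded01: "\<exists>C\<ge>0. \<forall>t\<in>{0..1::real}. \<bar>poly P t\<bar> \<le> C"
proof -
  have "bounded (poly P ` {0..1::real})"
    by (intro compact_imp_bounded compact_continuous_image) (auto intro!: continuous_intros)
  then obtain C where "\<forall>x\<in>poly P ` {0..1::real}. \<bar>x\<bar> \<le> C" by (auto simp: bounded_real)
  then show ?thesis by (intro exI[of _ "max C 0"]) auto
qed

lemma phi_bound:
  assumes "a' \<ge> \<mu>" "b' \<ge> \<kappa>"
  shows "\<exists>C. \<forall>t\<in>{0..1::real}. \<bar>poly R t * phi a' b' Q t\<bar> \<le> C * (t powr \<kappa> * (1-t) powr \<mu>)"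
proof -
  obtain C1 where C1: "C1 \<ge> 0" "\<forall>t\<in>{0..1::real}. \<bar>poly R t\<bar> \<le> C1" using poly_bounded01 by blast
  obtain C2 where C2: "C2 \<ge> 0" "\<forall>t\<in>{0..1::real}. \<bar>poly Q t\<bar> \<le> C2" using poly_bounded01 by blast
  show ?thesis
  proof (intro exI[of _ "C1 * C2"] ballI)
    fix t :: real assume t: "t \<in> {0..1}"
    have p1: "t powr b' \<le> t powr \<kappa>" using t assms by (intro powr_mono') auto
    have p2: "(1-t) powr a' \<le> (1-t) powr \<mu>" using t assms by (intro powr_mono') auto
    have "\<bar>poly R t * phi a' b' Q t\<bar> = \<bar>poly R t\<bar> * \<bar>poly Q t\<bar> * (t powr b' * (1-t) powr a')"
      unfolding phi_def by (simp add: abs_mult)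
    also have "\<dots> \<le> C1 * C2 * (t powr \<kappa> * (1-t) powr \<mu>)"
      using C1 C2 t p1 p2 by (intro mult_mono) auto
    finally show "\<bar>poly R t * phi a' b' Q t\<bar> \<le> C1 * C2 * (t powr \<kappa> * (1-t) powr \<mu>)" .
  qed
qed

lemma phi_int:
  assumes "\<kappa> > -1" "\<mu> > -1" "a' \<ge> \<mu>" "b' \<ge> \<kappa>"
  shows "set_integrable lborel {0..1::real} (\<lambda>t. poly R t * phi a' b' Q t)"
proof -
  obtain C where C: "\<forall>t\<in>{0..1::real}. \<bar>poly R t * phi a' b' Q t\<bar> \<le> C * (t powr \<kappa> * (1-t) powr \<mu>)"
    using phi_bound[OF assms(3,4)] by blast
  show ?thesis
  proof (rule set_integrable_bound[where f="\<lambda>t. C * (t powr \<kappa> * (1-t) powr \<mu>)"])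
    show "set_integrable lborel {0..1::real} (\<lambda>t. C * (t powr \<kappa> * (1 - t) powr \<mu>))"
      using w0_int[OF assms(1,2)] by auto
    show "set_borel_measurable lborel {0..1} (\<lambda>t. poly R t * phi a' b' Q t)"
      unfolding set_borel_measurable_def phi_def by (intro borel_measurable_scaleR borel_measurable_times) measurable
    show "AE x in lborel. x \<in> {0..1} \<longrightarrow> norm (poly R x * phi a' b' Q x) \<le> norm (C * (x powr \<kappa> * (1 - x) powr \<mu>))"
      using C by (auto intro!: AE_I2) (smt (verit, ccfv_SIG) atLeastAtMost_iff)
  qed
qed

lemma ftc_step:
  fixes Q R :: "real poly" and n k :: nat and \<mu> \<kappa> :: real
  assumes k: "\<kappa> > -1" "\<mu> > -1" "Suc k \<le> n"
  defines "ph \<equiv> \<lambda>j t. phi (\<mu> + real n - real j) (\<kappa> + real n - real j) (Qs (\<mu> + real n) (\<kappa> + real n) Q j) t"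
  shows "(LINT t:{0..1}|lborel. poly R t * ph (Suc k) t) = - (LINT t:{0..1}|lborel. poly (pderiv R) t * ph k t)"
proof -
  define F where "F t = poly R t * ph k t" for t
  have i1: "set_integrable lborel {0..1::real} (\<lambda>t. poly (pderiv R) t * ph k t)"
    unfolding ph_def using k by (intro phi_int[where \<kappa>=\<kappa> and \<mu>=\<mu>]) auto
  have i2: "set_integrable lborel {0..1::real} (\<lambda>t. poly R t * ph (Suc k) t)"
    unfolding ph_def using k by (intro phi_int[where \<kappa>=\<kappa> and \<mu>=\<mu>]) auto
  have cont: "continuous_on {0..1} F"
    unfolding F_def ph_def phi_def using k
    by (intro continuous_intros continuous_on_powr') auto
  have der: "(F has_vector_derivative (poly (pderiv R) x * ph k x + poly R x * ph (Suc k) x)) (at x)"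
    if x: "x \<in> {0<..<1}" for x
  proof -
    have "(ph k has_real_derivative ph (Suc k) x) (at x)"
      using phi_has_deriv[of x "\<mu> + real n - real k" "\<kappa> + real n - real k" "Qs (\<mu> + real n) (\<kappa> + real n) Q k"] x
      unfolding ph_def by (simp add: algebra_simps)
    then have "(F has_real_derivative (poly (pderiv R) x * ph k x + ph (Suc k) x * poly R x)) (at x)"
      unfolding F_def by (intro DERIV_mult poly_DERIV)
    then show ?thesis by (simp add: has_real_derivative_iff_has_vector_derivative[symmetric] mult.commute)
  qed
  have "((\<lambda>x. poly (pderiv R) x * ph k x + poly R x * ph (Suc k) x) has_integral (F 1 - F 0)) {0..1}"
    by (rule fundamental_theorem_of_calculus_interior) (use cont der in auto)
  moreover have "F 1 = 0" "F 0 = 0" unfolding F_def ph_def phi_def using k by auto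
  ultimately have hi: "((\<lambda>x. poly (pderiv R) x * ph k x + poly R x * ph (Suc k) x) has_integral 0) {0..1}"
    by simp
  have si: "set_integrable lborel {0..1::real} (\<lambda>x. poly (pderiv R) x * ph k x + poly R x * ph (Suc k) x)"
    using i1 i2 by (rule set_integral_add)
  have "(LINT x:{0..1}|lborel. poly (pderiv R) x * ph k x + poly R x * ph (Suc k) x) = 0"
    using set_borel_integral_eq_integral(2)[OF si] hi by (simp add: integral_unique)
  then show ?thesis using set_integral_add(2)[OF i1 i2] by simp
qed

lemma ortho_phi:
  fixes Q R :: "real poly" and n k :: nat and \<mu> \<kappa> :: real
  assumes k: "\<kappa> > -1" "\<mu> > -1"
  defines "ph \<equiv> \<lambda>j t. phi (\<mu> + real n - real j) (\<kappa> + real n - real j) (Qs (\<mu> + real n) (\<kappa> + real n) Q j) t"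
  shows "degree R < k \<Longrightarrow> k \<le> n \<Longrightarrow> (LINT t:{0..1}|lborel. poly R t * ph k t) = 0"
proof (induction k arbitrary: R)
  case 0
  then show ?case by simp
next
  case (Suc k)
  have "(LINT t:{0..1}|lborel. poly R t * ph (Suc k) t) = - (LINT t:{0..1}|lborel. poly (pderiv R) t * ph k t)"
    unfolding ph_def using k Suc.prems by (intro ftc_step) auto
  also have "\<dots> = 0"
  proof (cases "pderiv R = 0")
    case True
    then show ?thesis by simp
  next
    case False
    then have "degree R \<noteq> 0" by (simp add: pderiv_eq_0_iff)
    then have "degree (pderiv R) < k" using Suc.prems by (simp add: degree_pderiv)
    then show ?thesis using Suc.IH Suc.prems by simp
  qed
  finally show ?case .
qed

lemma deriv_n_int:
  fixes Q R :: "real poly" and n :: nat and \<mu> \<kappa> :: real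
  assumes k: "\<kappa> > -1" "\<mu> > -1"
  shows "set_integrable lborel {0..1::real} (\<lambda>t. (deriv ^^ n) (phi (\<mu> + real n) (\<kappa> + real n) Q) t * poly R t)"
    and "degree R < n \<Longrightarrow> (LINT t:{0..1}|lborel. (deriv ^^ n) (phi (\<mu> + real n) (\<kappa> + real n) Q) t * poly R t) = 0"
proof -
  define ph where "ph = (\<lambda>j t. phi (\<mu> + real n - real j) (\<kappa> + real n - real j) (Qs (\<mu> + real n) (\<kappa> + real n) Q j) t)"
  have eq: "indicator {0..1::real} t *\<^sub>R ((deriv ^^ n) (phi (\<mu> + real n) (\<kappa> + real n) Q) t * poly R t)
      = indicator {0..1::real} t *\<^sub>R (poly R t * ph n t)" if "t \<notin> {0,1}" for t
  proof (cases "t \<in> {0..1}")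
    case True
    then have "t \<in> {0<..<1}" using that by auto
    then show ?thesis unfolding ph_def by (simp add: deriv_iter)
  next
    case False
    then show ?thesis by simp
  qed
  have i: "set_integrable lborel {0..1::real} (\<lambda>t. poly R t * ph n t)"
    unfolding ph_def using k by (intro phi_int[where \<kappa>=\<kappa> and \<mu>=\<mu>]) auto
  show i2: "set_integrable lborel {0..1::real} (\<lambda>t. (deriv ^^ n) (phi (\<mu> + real n) (\<kappa> + real n) Q) t * poly R t)"
    using i unfolding set_integrable_def
    by (subst integrable_discrete_difference[where X="{0,1}"]) (use eq in auto)
  assume d: "degree R < n"
  have "(LINT t:{0..1}|lborel. (deriv ^^ n) (phi (\<mu> + real n) (\<kappa> + real n) Q) t * poly R t)
      = (LINT t:{0..1}|lborel. poly R t * ph n t)"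
    unfolding set_lebesgue_integral_def
    by (rule integral_discrete_difference[where X="{0,1}"]) (use eq in auto)
  also have "\<dots> = 0" unfolding ph_def using ortho_phi[OF k, of R n n] d by simp
  finally show "(LINT t:{0..1}|lborel. (deriv ^^ n) (phi (\<mu> + real n) (\<kappa> + real n) Q) t * poly R t) = 0" .
qed

definition PQ :: "nat \<Rightarrow> real \<Rightarrow> real \<Rightarrow> real poly" where
  "PQ k a b = (\<Sum>s = 0..k. smult (((real k + a) gchoose s) * ((real k + b) gchoose (k - s)))
                  ([:-1,1:] ^ (k - s) * [:0,1:] ^ s))"

lemma poly_PQ: "poly (PQ k a b) t = jacP k a b t"
  unfolding PQ_def jacP_def by (simp add: poly_sum algebra_simps)

lemma jac_fun_eq: "(\<lambda>t. jac_w a b t * jacP i a b t) = phi a b (PQ i a b)"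
  by (rule ext) (simp add: jac_w_def phi_def poly_PQ)

lemma kernel_poly:
  fixes R :: "real poly"
  assumes k: "\<kappa> > -1" "\<mu> > -1"
  shows "set_integrable lborel {0..1::real} (\<lambda>\<tau>. jac_kernel n N \<mu> \<kappa> \<xi> h \<tau> * poly R \<tau>)"
    and "degree R < n \<Longrightarrow> (LINT \<tau>:{0..1}|lborel. jac_kernel n N \<mu> \<kappa> \<xi> h \<tau> * poly R \<tau>) = 0"
proof -
  define A where "A = \<mu> + real n"
  define B where "B = \<kappa> + real n"
  define c0 :: real where "c0 = (-1) ^ n / h ^ n"
  define c where "c i = jacP i A B \<xi> / jac_norm2 i A B" for i
  define D where "D i = (deriv ^^ n) (phi A B (PQ i A B))" for i
  have eq: "indicator {0..1} \<tau> *\<^sub>R (jac_kernel n N \<mu> \<kappa> \<xi> h \<tau> * poly R \<tau>) =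
     c0 * (\<Sum>i = 0..N - n. c i * (indicator {0..1} \<tau> *\<^sub>R (D i \<tau> * poly R \<tau>)))" for \<tau> :: real
    unfolding jac_kernel_def c0_def c_def D_def A_def B_def jac_fun_eq
    by (simp add: sum_distrib_left sum_distrib_right algebra_simps)
  have ii: "integrable lborel (\<lambda>\<tau>. indicator {0..1} \<tau> *\<^sub>R (D i \<tau> * poly R \<tau>))" for i
    using deriv_n_int(1)[OF k, of n "PQ i A B" R] unfolding set_integrable_def D_def A_def B_def .
  show "set_integrable lborel {0..1::real} (\<lambda>\<tau>. jac_kernel n N \<mu> \<kappa> \<xi> h \<tau> * poly R \<tau>)"
    unfolding set_integrable_def eq using ii by (intro integrable_mult_right integrable_sum) auto
  assume d: "degree R < n"
  have zz: "integral\<^sup>L lborel (\<lambda>\<tau>. indicator {0..1} \<tau> *\<^sub>R (D i \<tau> * poly R \<tau>)) = 0" for i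
    using deriv_n_int(2)[OF k, of R n "PQ i A B"] d unfolding set_lebesgue_integral_def D_def A_def B_def by simp
  show "(LINT \<tau>:{0..1}|lborel. jac_kernel n N \<mu> \<kappa> \<xi> h \<tau> * poly R \<tau>) = 0"
    unfolding set_lebesgue_integral_def eq using ii zz by (simp add: integral_sum)
qed



lemma L2_const: "prob_space M \<Longrightarrow> L2rv M (\<lambda>x. c)"
  unfolding L2rv_def
  by (auto intro!: finite_measure.integrable_const prob_space.finite_measure)

lemma L2_int:
  assumes "prob_space M" "L2rv M Y"
  shows "integrable M Y"
proof (rule Bochner_Integration.integrable_bound[where f="\<lambda>x. 1 + (Y x)^2"])
  show "integrable M (\<lambda>x. 1 + (Y x)^2)"
    using assms by (auto simp: L2rv_def intro!: Bochner_Integration.integrable_add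
        finite_measure.integrable_const prob_space.finite_measure)
  show "Y \<in> borel_measurable M" using assms by (simp add: L2rv_def)
  show "AE x in M. norm (Y x) \<le> norm (1 + (Y x)\<^sup>2)"
  proof (intro AE_I2)
    fix x
    have "\<bar>Y x\<bar> \<le> 1 + (Y x)^2"
    proof (cases "\<bar>Y x\<bar> \<le> 1")
      case True then show ?thesis by (smt (verit) zero_le_power2)
    next
      case False
      then have "\<bar>Y x\<bar> * 1 \<le> \<bar>Y x\<bar> * \<bar>Y x\<bar>" by (intro mult_left_mono) auto
      then show ?thesis by (simp add: power2_eq_square abs_mult[symmetric])
    qed
    then show "norm (Y x) \<le> norm (1 + (Y x)\<^sup>2)" by simp
  qed
qed

lemma L2_prod:
  assumes "prob_space M" "L2rv M Y" "L2rv M Z"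
  shows "integrable M (\<lambda>x. Y x * Z x)"
proof (rule Bochner_Integration.integrable_bound[where f="\<lambda>x. (Y x)^2 + (Z x)^2"])
  show "integrable M (\<lambda>x. (Y x)^2 + (Z x)^2)"
    using assms by (auto simp: L2rv_def)
  show "(\<lambda>x. Y x * Z x) \<in> borel_measurable M" using assms by (auto simp: L2rv_def intro!: borel_measurable_times)
  show "AE x in M. norm (Y x * Z x) \<le> norm ((Y x)^2 + (Z x)^2)"
  proof (intro AE_I2)
    fix x
    have "0 \<le> (\<bar>Y x\<bar> - \<bar>Z x\<bar>)^2" by simp
    then have "2 * (\<bar>Y x\<bar> * \<bar>Z x\<bar>) \<le> (Y x)^2 + (Z x)^2"
      by (simp add: power2_eq_square algebra_simps)
    moreover have "0 \<le> \<bar>Y x\<bar> * \<bar>Z x\<bar>" by simp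
    ultimately have "\<bar>Y x\<bar> * \<bar>Z x\<bar> \<le> (Y x)^2 + (Z x)^2" by linarith
    moreover have "\<bar>(Y x)^2 + (Z x)^2\<bar> = (Y x)^2 + (Z x)^2" by (intro abs_of_nonneg) simp
    ultimately show "norm (Y x * Z x) \<le> norm ((Y x)^2 + (Z x)^2)"
      by (simp add: abs_mult)
  qed
qed

lemma Cv_eq:
  assumes "prob_space M" "L2rv M Y" "L2rv M Z"
  shows "Cv M Y Z = Ex M (\<lambda>x. Y x * Z x) - Ex M Y * Ex M Z"
proof -
  have iY: "integrable M Y" and iZ: "integrable M Z" and iYZ: "integrable M (\<lambda>x. Y x * Z x)"
    using L2_int[OF assms(1,2)] L2_int[OF assms(1,3)] L2_prod[OF assms] by auto
  define a where "a = Ex M Y"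
  define b where "b = Ex M Z"
  have m: "measure M (space M) = 1" using assms(1) by (simp add: prob_space.prob_space)
  have "Cv M Y Z = (\<integral>x. (Y x * Z x - b * Y x) - (a * Z x - a * b) \<partial>M)"
    unfolding Cv_def a_def b_def by (intro Bochner_Integration.integral_cong) (auto simp: algebra_simps)
  also have "\<dots> = Ex M (\<lambda>x. Y x * Z x) - b * a - (a * b - a * b)"
  proof -
    have i1: "integrable M (\<lambda>x. Y x * Z x - b * Y x)" using iY iYZ by auto
    have i2: "integrable M (\<lambda>x. a * Z x - a * b)" using iZ m
      by (auto intro!: Bochner_Integration.integrable_diff finite_measure.integrable_const prob_space.finite_measure assms(1))
    have "(\<integral>x. (Y x * Z x - b * Y x) - (a * Z x - a * b) \<partial>M) = (\<integral>x. Y x * Z x - b * Y x \<partial>M) - (\<integral>x. a * Z x - a * b \<partial>M)"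
      using i1 i2 by (rule Bochner_Integration.integral_diff)
    also have "(\<integral>x. Y x * Z x - b * Y x \<partial>M) = (\<integral>x. Y x * Z x \<partial>M) - b * (\<integral>x. Y x \<partial>M)"
      using iY iYZ by (subst Bochner_Integration.integral_diff) auto
    also have "(\<integral>x. a * Z x - a * b \<partial>M) = a * (\<integral>x. Z x \<partial>M) - a * b"
    proof -
      have ic: "integrable M (\<lambda>x. a * b)"
        by (auto intro!: finite_measure.integrable_const prob_space.finite_measure assms(1))
      have "(\<integral>x. a * Z x - a * b \<partial>M) = (\<integral>x. a * Z x \<partial>M) - (\<integral>x. a * b \<partial>M)"
        using iZ ic by (intro Bochner_Integration.integral_diff) auto
      then show ?thesis using m by simp
    qed
    finally show ?thesis unfolding a_def b_def Ex_def by simp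
  qed
  finally show ?thesis unfolding a_def b_def by simp
qed

lemma ms_E:
  assumes "prob_space M" "ms_integral M f X Y"
  shows "set_integrable lborel {0..1::real} (\<lambda>\<tau>. f \<tau> * Ex M (X \<tau>))"
    and "Ex M Y = (LINT \<tau>:{0..1}|lborel. f \<tau> * Ex M (X \<tau>))"
proof -
  have "L2rv M (\<lambda>x. 1)" by (rule L2_const[OF assms(1)])
  with assms(2) have "set_integrable lborel {0..1::real} (\<lambda>\<tau>. f \<tau> * Ex M (\<lambda>x. X \<tau> x * 1))
     \<and> Ex M (\<lambda>x. Y x * 1) = (LINT \<tau>:{0..1}|lborel. f \<tau> * Ex M (\<lambda>x. X \<tau> x * 1))"
    unfolding ms_integral_def by blast
  then show "set_integrable lborel {0..1::real} (\<lambda>\<tau>. f \<tau> * Ex M (X \<tau>))"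
    and "Ex M Y = (LINT \<tau>:{0..1}|lborel. f \<tau> * Ex M (X \<tau>))" by simp_all
qed

lemma ms_Cv:
  assumes P: "prob_space M" and ms: "ms_integral M f X Y" and Z: "L2rv M Z"
    and X: "\<And>\<tau>. \<tau> \<in> {0..1} \<Longrightarrow> L2rv M (X \<tau>)"
  shows "set_integrable lborel {0..1::real} (\<lambda>\<tau>. f \<tau> * Cv M (X \<tau>) Z)"
    and "Cv M Y Z = (LINT \<tau>:{0..1}|lborel. f \<tau> * Cv M (X \<tau>) Z)"
proof -
  have Y: "L2rv M Y" using ms by (simp add: ms_integral_def)
  have h1: "set_integrable lborel {0..1::real} (\<lambda>\<tau>. f \<tau> * Ex M (\<lambda>x. X \<tau> x * Z x))"
    and e1: "Ex M (\<lambda>x. Y x * Z x) = (LINT \<tau>:{0..1}|lborel. f \<tau> * Ex M (\<lambda>x. X \<tau> x * Z x))"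
    using ms Z unfolding ms_integral_def by blast+
  note h2 = ms_E[OF P ms]
  have h3: "set_integrable lborel {0..1::real} (\<lambda>\<tau>. Ex M Z * (f \<tau> * Ex M (X \<tau>)))"
    using h2(1) by auto
  have eq: "\<And>\<tau>. \<tau> \<in> {0..1} \<Longrightarrow> f \<tau> * Cv M (X \<tau>) Z = f \<tau> * Ex M (\<lambda>x. X \<tau> x * Z x) - Ex M Z * (f \<tau> * Ex M (X \<tau>))"
    by (subst Cv_eq[OF P X Z]) (simp_all add: algebra_simps)
  show "set_integrable lborel {0..1::real} (\<lambda>\<tau>. f \<tau> * Cv M (X \<tau>) Z)"
    using set_integral_diff(1)[OF h1 h3] by (subst set_integrable_cong[OF refl refl eq]) auto
  have "(LINT \<tau>:{0..1}|lborel. f \<tau> * Cv M (X \<tau>) Z)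
      = (LINT \<tau>:{0..1}|lborel. f \<tau> * Ex M (\<lambda>x. X \<tau> x * Z x) - Ex M Z * (f \<tau> * Ex M (X \<tau>)))"
    by (rule set_lebesgue_integral_cong) (use eq in auto)
  also have "\<dots> = Ex M (\<lambda>x. Y x * Z x) - Ex M Z * Ex M Y"
    using set_integral_diff(2)[OF h1 h3] e1 h2(2) by simp
  also have "\<dots> = Cv M Y Z" using Cv_eq[OF P Y Z] by simp
  finally show "Cv M Y Z = (LINT \<tau>:{0..1}|lborel. f \<tau> * Cv M (X \<tau>) Z)" ..
qed



lemma seg:
  assumes "is_interval I" "t0 \<in> I" "t0 + c \<in> I" "\<tau> \<in> {0..1::real}"
  shows "t0 + c * \<tau> \<in> I"
proof (cases "c \<ge> 0")
  case True
  have "c * \<tau> \<le> c" using assms(4) True by (simp add: mult_left_le)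
  moreover have "0 \<le> c * \<tau>" using assms(4) True by simp
  ultimately show ?thesis using assms(1-3) unfolding is_interval_1
    by (metis add_increasing2 add_left_mono order_refl le_add_same_cancel1)
next
  case False
  have "c \<le> c * \<tau>" using assms(4) False by (simp add: mult_le_cancel_left1)
  moreover have "c * \<tau> \<le> 0" using assms(4) False by (simp add: mult_nonpos_nonneg)
  ultimately show ?thesis using assms(1-3) unfolding is_interval_1
    by (metis add_left_mono add_le_same_cancel1)
qed

lemma deg_monom_sum_lt: "n \<ge> 1 \<Longrightarrow> degree (\<Sum>i<n. monom (c i) i :: real poly) < n"
  by (intro degree_sum_less) (auto intro: le_less_trans[OF degree_monom_le])

lemma deg_monom_sum_le: "degree (\<Sum>i\<le>m. monom (c i) i :: real poly) \<le> m"
  by (intro degree_sum_le) (auto intro: order_trans[OF degree_monom_le])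

lemma deg_lin_le: "degree (smult a ([:u, v:] ^ i) :: real poly) \<le> i"
proof -
  have "degree (smult a ([:u, v:] ^ i)) \<le> degree ([:u, v:] ^ i)" by (rule degree_smult_le)
  also have "\<dots> \<le> degree [:u, v:] * i" by (rule degree_power_le)
  also have "\<dots> \<le> i" by simp
  finally show ?thesis .
qed

lemma deg_lin_sum_lt: "n \<ge> 1 \<Longrightarrow> degree (\<Sum>i<n. smult (c i) ([:u, v:] ^ i) :: real poly) < n"
proof (rule degree_sum_less)
  fix i assume "i \<in> {..<n}"
  then show "degree (smult (c i) ([:u, v:] ^ i)) < n" by (intro le_less_trans[OF deg_lin_le]) simp
qed simp

lemma deg_lin_sum_le: "degree (\<Sum>i\<le>m. smult (c i) ([:u, v:] ^ i) :: real poly) \<le> m"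
proof (rule degree_sum_le)
  fix i assume "i \<in> {..m}"
  then show "degree (smult (c i) ([:u, v:] ^ i)) \<le> m" by (intro order_trans[OF deg_lin_le]) simp
qed simp

lemma lint_lin:
  fixes F G H :: "real \<Rightarrow> real" and c :: real
  assumes F: "set_integrable lborel {0..1::real} F" and G: "set_integrable lborel {0..1::real} G"
    and eq: "\<And>x. x \<in> {0..1} \<Longrightarrow> F x = c * G x + H x"
  shows "set_integrable lborel {0..1::real} H"
    and "(LINT x:{0..1}|lborel. F x) = c * (LINT x:{0..1}|lborel. G x) + (LINT x:{0..1}|lborel. H x)"
proof -
  have G': "set_integrable lborel {0..1::real} (\<lambda>x. c * G x)" using G by auto
  have eq': "\<And>x. x \<in> {0..1} \<Longrightarrow> H x = F x - c * G x" using eq by simp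
  show H: "set_integrable lborel {0..1::real} H"
    using set_integral_diff(1)[OF F G'] by (subst set_integrable_cong[OF refl refl eq']) auto
  have "(LINT x:{0..1}|lborel. F x) = (LINT x:{0..1}|lborel. c * G x + H x)"
    by (rule set_lebesgue_integral_cong) (use eq in auto)
  also have "\<dots> = (LINT x:{0..1}|lborel. c * G x) + (LINT x:{0..1}|lborel. H x)"
    using set_integral_add(2)[OF G' H] .
  finally show "(LINT x:{0..1}|lborel. F x) = c * (LINT x:{0..1}|lborel. G x) + (LINT x:{0..1}|lborel. H x)"
    by simp
qed

lemma L2_I:
  assumes "noise_C1 M X" "I \<subseteq> {0..}" "a \<in> I"
  shows "L2rv M (X a)"
  using assms unfolding noise_C1_def by auto

lemma mean_C2:
  assumes P: "prob_space M" and C1: "noise_C1 M X" and C2: "noise_C2 M X I n"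
    and iv: "is_interval I" and I0: "I \<subseteq> {0..}" and n: "n \<ge> 1" and k: "\<kappa> > -1" "\<mu> > -1"
    and t: "t0 \<in> I" "t0 + \<beta> * T \<in> I" "t0' \<in> I" "t0' + \<beta> * T \<in> I"
    and Y: "jacobi_noise_error M X n N \<mu> \<kappa> \<xi> \<beta> T t0 Y"
    and Y': "jacobi_noise_error M X n N \<mu> \<kappa> \<xi> \<beta> T t0' Y'"
  shows "Ex M Y = Ex M Y'"
proof -
  obtain k1 k2 k3 :: "nat \<Rightarrow> nat" and \<nu> \<eta> \<eta>' :: "nat \<Rightarrow> real" and n1 n2 :: nat where
    C: "\<forall>t0 s \<tau>. t0 + s \<in> I \<and> t0 + \<tau> \<in> I \<longrightarrow>
           Ex M (X (t0 + \<tau>)) = (\<Sum>i<n. \<nu> i * t0 ^ k1 i * \<tau> ^ i) + Ex M (X \<tau>) \<and>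
           Cv M (X (t0 + s)) (X (t0 + \<tau>)) =
             (\<Sum>i\<le>n1. \<eta> i * t0 ^ k2 i * \<tau> ^ i) * (\<Sum>i\<le>n2. \<eta>' i * t0 ^ k3 i * s ^ i)
             + Cv M (X s) (X \<tau>)"
    using C2 unfolding noise_C2_def by blast
  define p where "p = jac_kernel n N \<mu> \<kappa> \<xi> (\<beta> * T)"
  note E1 = ms_E[OF P Y[unfolded jacobi_noise_error_def, folded p_def]]
  note E2 = ms_E[OF P Y'[unfolded jacobi_noise_error_def, folded p_def]]
  define R where "R = (\<Sum>i<n. monom (\<nu> i * (t0 ^ k1 i - t0' ^ k1 i) * (\<beta> * T) ^ i) i)"
  have G: "set_integrable lborel {0..1::real} (\<lambda>\<tau>. p \<tau> * poly R \<tau>)"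
    unfolding p_def by (rule kernel_poly(1)[OF k])
  have G0: "(LINT \<tau>:{0..1}|lborel. p \<tau> * poly R \<tau>) = 0"
    unfolding p_def by (rule kernel_poly(2)[OF k]) (use n in \<open>simp add: R_def deg_monom_sum_lt\<close>)
  have eq: "p \<tau> * Ex M (X (t0 + \<beta> * T * \<tau>)) = 1 * (p \<tau> * poly R \<tau>) + p \<tau> * Ex M (X (t0' + \<beta> * T * \<tau>))"
    if \<tau>: "\<tau> \<in> {0..1}" for \<tau>
  proof -
    have a: "t0 + \<beta> * T * \<tau> \<in> I" "t0' + \<beta> * T * \<tau> \<in> I" using seg[OF iv] t \<tau> by auto
    have e1: "Ex M (X (t0 + \<beta> * T * \<tau>)) = (\<Sum>i<n. \<nu> i * t0 ^ k1 i * (\<beta> * T * \<tau>) ^ i) + Ex M (X (\<beta> * T * \<tau>))"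
      using C a by blast
    have e2: "Ex M (X (t0' + \<beta> * T * \<tau>)) = (\<Sum>i<n. \<nu> i * t0' ^ k1 i * (\<beta> * T * \<tau>) ^ i) + Ex M (X (\<beta> * T * \<tau>))"
      using C a by blast
    have pr: "poly R \<tau> = (\<Sum>i<n. \<nu> i * t0 ^ k1 i * (\<beta> * T * \<tau>) ^ i) - (\<Sum>i<n. \<nu> i * t0' ^ k1 i * (\<beta> * T * \<tau>) ^ i)"
      unfolding R_def by (simp add: poly_sum poly_monom sum_subtractf[symmetric] power_mult_distrib algebra_simps)
    show ?thesis unfolding e1 e2 pr by (simp add: algebra_simps)
  qed
  have "(LINT \<tau>:{0..1}|lborel. p \<tau> * Ex M (X (t0 + \<beta> * T * \<tau>)))
     = 1 * (LINT \<tau>:{0..1}|lborel. p \<tau> * poly R \<tau>) + (LINT \<tau>:{0..1}|lborel. p \<tau> * Ex M (X (t0' + \<beta> * T * \<tau>)))"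
    by (rule lint_lin(2)[OF E1(1) G eq])
  then show ?thesis using E1(2) E2(2) G0 by simp
qed

lemma Cv_comm: "Cv M Y Z = Cv M Z Y"
  unfolding Cv_def by (simp add: mult.commute)

lemma cov_C2:
  assumes P: "prob_space M" and C1: "noise_C1 M X" and C2: "noise_C2 M X I n"
    and iv: "is_interval I" and I0: "I \<subseteq> {0..}" and n: "n \<ge> 1" and k: "\<kappa> > -1" "\<mu> > -1"
    and t: "t0 \<in> I" "t0 + \<beta> * T1 \<in> I" "t0 + \<beta> * T2 \<in> I"
    and Y1: "jacobi_noise_error M X n N \<mu> \<kappa> \<xi> \<beta> T1 t0 Y1"
    and Y2: "jacobi_noise_error M X n N \<mu> \<kappa> \<xi> \<beta> T2 t0 Y2"
  shows "Cv M Y1 Y2 = (LINT \<tau>:{0..1}|lborel. jac_kernel n N \<mu> \<kappa> \<xi> (\<beta> * T1) \<tau> *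
            (LINT s:{0..1}|lborel. jac_kernel n N \<mu> \<kappa> \<xi> (\<beta> * T2) s * Cv M (X (\<beta> * T2 * s)) (X (\<beta> * T1 * \<tau>))))"
proof -
  obtain k1 k2 k3 :: "nat \<Rightarrow> nat" and \<nu> \<eta> \<eta>' :: "nat \<Rightarrow> real" and n1 n2 :: nat where
    mn: "min n1 n2 \<le> n - 1" and
    C: "\<forall>t0 s \<tau>. t0 + s \<in> I \<and> t0 + \<tau> \<in> I \<longrightarrow>
           Ex M (X (t0 + \<tau>)) = (\<Sum>i<n. \<nu> i * t0 ^ k1 i * \<tau> ^ i) + Ex M (X \<tau>) \<and>
           Cv M (X (t0 + s)) (X (t0 + \<tau>)) =
             (\<Sum>i\<le>n1. \<eta> i * t0 ^ k2 i * \<tau> ^ i) * (\<Sum>i\<le>n2. \<eta>' i * t0 ^ k3 i * s ^ i)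
             + Cv M (X s) (X \<tau>)"
    using C2 unfolding noise_C2_def by blast
  define p1 where "p1 = jac_kernel n N \<mu> \<kappa> \<xi> (\<beta> * T1)"
  define p2 where "p2 = jac_kernel n N \<mu> \<kappa> \<xi> (\<beta> * T2)"
  have ms1: "ms_integral M p1 (\<lambda>\<tau>. X (t0 + \<beta> * T1 * \<tau>)) Y1"
    using Y1 unfolding jacobi_noise_error_def p1_def .
  have ms2: "ms_integral M p2 (\<lambda>\<tau>. X (t0 + \<beta> * T2 * \<tau>)) Y2"
    using Y2 unfolding jacobi_noise_error_def p2_def .
  have L2Y2: "L2rv M Y2" using ms2 by (simp add: ms_integral_def)
  have a1: "t0 + \<beta> * T1 * \<tau> \<in> I" if "\<tau> \<in> {0..1}" for \<tau> using seg[OF iv t(1) t(2) that] by simp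
  have a2: "t0 + \<beta> * T2 * \<tau> \<in> I" if "\<tau> \<in> {0..1}" for \<tau> using seg[OF iv t(1) t(3) that] by simp
  have X1: "L2rv M (X (t0 + \<beta> * T1 * \<tau>))" if "\<tau> \<in> {0..1}" for \<tau> using L2_I[OF C1 I0 a1[OF that]] .
  have X2: "L2rv M (X (t0 + \<beta> * T2 * \<tau>))" if "\<tau> \<in> {0..1}" for \<tau> using L2_I[OF C1 I0 a2[OF that]] .
  note G1 = ms_Cv[OF P ms1 L2Y2 X1]
  define RQ where "RQ = (\<Sum>i\<le>n2. monom (\<eta>' i * t0 ^ k3 i * (\<beta> * T2) ^ i) i)"
  define RP where "RP = (\<Sum>i\<le>n1. monom (\<eta> i * t0 ^ k2 i * (\<beta> * T1) ^ i) i)"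
  define cQ where "cQ = (LINT s:{0..1}|lborel. p2 s * poly RQ s)"
  define I0f where "I0f \<tau> = (LINT s:{0..1}|lborel. p2 s * Cv M (X (\<beta> * T2 * s)) (X (\<beta> * T1 * \<tau>)))" for \<tau>
  have intQ: "set_integrable lborel {0..1::real} (\<lambda>s. p2 s * poly RQ s)"
    unfolding p2_def by (rule kernel_poly(1)[OF k])
  have intP: "set_integrable lborel {0..1::real} (\<lambda>s. p1 s * poly RP s)"
    unfolding p1_def by (rule kernel_poly(1)[OF k])
  have inner: "Cv M (X (t0 + \<beta> * T1 * \<tau>)) Y2 = poly RP \<tau> * cQ + I0f \<tau>"
    if \<tau>: "\<tau> \<in> {0..1}" for \<tau>
  proof -
    note G2 = ms_Cv[OF P ms2 X1[OF \<tau>] X2]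
    have eq: "p2 s * Cv M (X (t0 + \<beta> * T2 * s)) (X (t0 + \<beta> * T1 * \<tau>))
        = poly RP \<tau> * (p2 s * poly RQ s) + p2 s * Cv M (X (\<beta> * T2 * s)) (X (\<beta> * T1 * \<tau>))"
      if s: "s \<in> {0..1}" for s
    proof -
      have "Cv M (X (t0 + \<beta> * T2 * s)) (X (t0 + \<beta> * T1 * \<tau>)) =
             (\<Sum>i\<le>n1. \<eta> i * t0 ^ k2 i * (\<beta> * T1 * \<tau>) ^ i) * (\<Sum>i\<le>n2. \<eta>' i * t0 ^ k3 i * (\<beta> * T2 * s) ^ i)
             + Cv M (X (\<beta> * T2 * s)) (X (\<beta> * T1 * \<tau>))"
        using C a1[OF \<tau>] a2[OF s] by blast
      moreover have "poly RP \<tau> = (\<Sum>i\<le>n1. \<eta> i * t0 ^ k2 i * (\<beta> * T1 * \<tau>) ^ i)"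
        unfolding RP_def by (simp add: poly_sum poly_monom power_mult_distrib algebra_simps)
      moreover have "poly RQ s = (\<Sum>i\<le>n2. \<eta>' i * t0 ^ k3 i * (\<beta> * T2 * s) ^ i)"
        unfolding RQ_def by (simp add: poly_sum poly_monom power_mult_distrib algebra_simps)
      ultimately show ?thesis by (simp add: algebra_simps)
    qed
    have "Cv M (X (t0 + \<beta> * T1 * \<tau>)) Y2 = Cv M Y2 (X (t0 + \<beta> * T1 * \<tau>))" by (rule Cv_comm)
    also have "\<dots> = (LINT s:{0..1}|lborel. p2 s * Cv M (X (t0 + \<beta> * T2 * s)) (X (t0 + \<beta> * T1 * \<tau>)))"
      by (rule G2(2))
    also have "\<dots> = poly RP \<tau> * cQ + I0f \<tau>"
      unfolding cQ_def I0f_def by (rule lint_lin(2)[OF G2(1) intQ eq])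
    finally show ?thesis .
  qed
  have eqo: "p1 \<tau> * Cv M (X (t0 + \<beta> * T1 * \<tau>)) Y2 = cQ * (p1 \<tau> * poly RP \<tau>) + p1 \<tau> * I0f \<tau>"
    if \<tau>: "\<tau> \<in> {0..1}" for \<tau>
    using inner[OF \<tau>] by (simp add: algebra_simps)
  have "Cv M Y1 Y2 = cQ * (LINT \<tau>:{0..1}|lborel. p1 \<tau> * poly RP \<tau>) + (LINT \<tau>:{0..1}|lborel. p1 \<tau> * I0f \<tau>)"
    using G1(2) lint_lin(2)[OF G1(1) intP eqo] by simp
  moreover have "cQ * (LINT \<tau>:{0..1}|lborel. p1 \<tau> * poly RP \<tau>) = 0"
  proof (cases "n2 \<le> n - 1")
    case True
    have "degree RQ < n" using True n deg_monom_sum_le[of _ n2] unfolding RQ_def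
      by (meson le_less_trans diff_less less_numeral_extra(1) order.trans less_le_trans)
    then have "cQ = 0" unfolding cQ_def p2_def by (rule kernel_poly(2)[OF k])
    then show ?thesis by simp
  next
    case False
    then have "n1 \<le> n - 1" using mn by simp
    have "degree RP < n" using \<open>n1 \<le> n - 1\<close> n deg_monom_sum_le[of _ n1] unfolding RP_def
      by (meson le_less_trans diff_less less_numeral_extra(1) order.trans less_le_trans)
    then have "(LINT \<tau>:{0..1}|lborel. p1 \<tau> * poly RP \<tau>) = 0" unfolding p1_def by (rule kernel_poly(2)[OF k])
    then show ?thesis by simp
  qed
  ultimately show ?thesis unfolding p1_def p2_def I0f_def by simp
qed

lemma mean_C3:
  assumes P: "prob_space M" and C3: "noise_C3 M X I n"
    and iv: "is_interval I" and n: "n \<ge> 1" and k: "\<kappa> > -1" "\<mu> > -1"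
    and t: "t0 \<in> I" "t0 + \<beta> * T \<in> I"
    and Y: "jacobi_noise_error M X n N \<mu> \<kappa> \<xi> \<beta> T t0 Y"
  shows "Ex M Y = 0"
proof -
  obtain \<nu> \<eta> \<eta>' :: "nat \<Rightarrow> real" and n1 n2 :: nat where
    C: "\<forall>s\<in>I. \<forall>\<tau>\<in>I.
           Ex M (X \<tau>) = (\<Sum>i<n. \<nu> i * \<tau> ^ i) \<and>
           Cv M (X s) (X \<tau>) = (\<Sum>i\<le>n1. \<eta> i * \<tau> ^ i) * (\<Sum>i\<le>n2. \<eta>' i * s ^ i)"
    using C3 unfolding noise_C3_def by blast
  define p where "p = jac_kernel n N \<mu> \<kappa> \<xi> (\<beta> * T)"
  note E1 = ms_E[OF P Y[unfolded jacobi_noise_error_def, folded p_def]]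
  define R where "R = (\<Sum>i<n. smult (\<nu> i) ([:t0, \<beta> * T:] ^ i))"
  have eq: "p \<tau> * Ex M (X (t0 + \<beta> * T * \<tau>)) = p \<tau> * poly R \<tau>" if \<tau>: "\<tau> \<in> {0..1}" for \<tau>
  proof -
    have a: "t0 + \<beta> * T * \<tau> \<in> I" using seg[OF iv t(1) t(2) \<tau>] by simp
    have "Ex M (X (t0 + \<beta> * T * \<tau>)) = (\<Sum>i<n. \<nu> i * (t0 + \<beta> * T * \<tau>) ^ i)" using C a by blast
    also have "\<dots> = poly R \<tau>" unfolding R_def by (simp add: poly_sum algebra_simps)
    finally show ?thesis by simp
  qed
  have "Ex M Y = (LINT \<tau>:{0..1}|lborel. p \<tau> * poly R \<tau>)"
    unfolding E1(2) by (rule set_lebesgue_integral_cong) (use eq in auto)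
  also have "\<dots> = 0" unfolding p_def
    by (rule kernel_poly(2)[OF k]) (use n in \<open>simp add: R_def deg_lin_sum_lt\<close>)
  finally show ?thesis .
qed

lemma cov_C3:
  assumes P: "prob_space M" and C1: "noise_C1 M X" and C3: "noise_C3 M X I n"
    and iv: "is_interval I" and I0: "I \<subseteq> {0..}" and n: "n \<ge> 1" and k: "\<kappa> > -1" "\<mu> > -1"
    and t: "t0 \<in> I" "t0 + \<beta> * T1 \<in> I" "t0 + \<beta> * T2 \<in> I"
    and Y1: "jacobi_noise_error M X n N \<mu> \<kappa> \<xi> \<beta> T1 t0 Y1"
    and Y2: "jacobi_noise_error M X n N \<mu> \<kappa> \<xi> \<beta> T2 t0 Y2"
  shows "Cv M Y1 Y2 = 0"
proof -
  obtain \<nu> \<eta> \<eta>' :: "nat \<Rightarrow> real" and n1 n2 :: nat where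
    mn: "min n1 n2 \<le> n - 1" and
    C: "\<forall>s\<in>I. \<forall>\<tau>\<in>I.
           Ex M (X \<tau>) = (\<Sum>i<n. \<nu> i * \<tau> ^ i) \<and>
           Cv M (X s) (X \<tau>) = (\<Sum>i\<le>n1. \<eta> i * \<tau> ^ i) * (\<Sum>i\<le>n2. \<eta>' i * s ^ i)"
    using C3 unfolding noise_C3_def by blast
  define p1 where "p1 = jac_kernel n N \<mu> \<kappa> \<xi> (\<beta> * T1)"
  define p2 where "p2 = jac_kernel n N \<mu> \<kappa> \<xi> (\<beta> * T2)"
  have ms1: "ms_integral M p1 (\<lambda>\<tau>. X (t0 + \<beta> * T1 * \<tau>)) Y1"
    using Y1 unfolding jacobi_noise_error_def p1_def .
  have ms2: "ms_integral M p2 (\<lambda>\<tau>. X (t0 + \<beta> * T2 * \<tau>)) Y2"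
    using Y2 unfolding jacobi_noise_error_def p2_def .
  have L2Y2: "L2rv M Y2" using ms2 by (simp add: ms_integral_def)
  have a1: "t0 + \<beta> * T1 * \<tau> \<in> I" if "\<tau> \<in> {0..1}" for \<tau> using seg[OF iv t(1) t(2) that] by simp
  have a2: "t0 + \<beta> * T2 * \<tau> \<in> I" if "\<tau> \<in> {0..1}" for \<tau> using seg[OF iv t(1) t(3) that] by simp
  have X1: "L2rv M (X (t0 + \<beta> * T1 * \<tau>))" if "\<tau> \<in> {0..1}" for \<tau> using L2_I[OF C1 I0 a1[OF that]] .
  have X2: "L2rv M (X (t0 + \<beta> * T2 * \<tau>))" if "\<tau> \<in> {0..1}" for \<tau> using L2_I[OF C1 I0 a2[OF that]] .
  note G1 = ms_Cv[OF P ms1 L2Y2 X1]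
  define RP where "RP = (\<Sum>i\<le>n1. smult (\<eta> i) ([:t0, \<beta> * T1:] ^ i))"
  define RQ where "RQ = (\<Sum>i\<le>n2. smult (\<eta>' i) ([:t0, \<beta> * T2:] ^ i))"
  define cQ where "cQ = (LINT s:{0..1}|lborel. p2 s * poly RQ s)"
  have intQ: "set_integrable lborel {0..1::real} (\<lambda>s. p2 s * poly RQ s)"
    unfolding p2_def by (rule kernel_poly(1)[OF k])
  have intP: "set_integrable lborel {0..1::real} (\<lambda>s. p1 s * poly RP s)"
    unfolding p1_def by (rule kernel_poly(1)[OF k])
  have inner: "Cv M (X (t0 + \<beta> * T1 * \<tau>)) Y2 = poly RP \<tau> * cQ"
    if \<tau>: "\<tau> \<in> {0..1}" for \<tau>
  proof -
    note G2 = ms_Cv[OF P ms2 X1[OF \<tau>] X2]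
    have eq: "p2 s * Cv M (X (t0 + \<beta> * T2 * s)) (X (t0 + \<beta> * T1 * \<tau>))
        = poly RP \<tau> * (p2 s * poly RQ s) + 0"
      if s: "s \<in> {0..1}" for s
    proof -
      have "Cv M (X (t0 + \<beta> * T2 * s)) (X (t0 + \<beta> * T1 * \<tau>)) =
             (\<Sum>i\<le>n1. \<eta> i * (t0 + \<beta> * T1 * \<tau>) ^ i) * (\<Sum>i\<le>n2. \<eta>' i * (t0 + \<beta> * T2 * s) ^ i)"
        using C a1[OF \<tau>] a2[OF s] by blast
      moreover have "poly RP \<tau> = (\<Sum>i\<le>n1. \<eta> i * (t0 + \<beta> * T1 * \<tau>) ^ i)"
        unfolding RP_def by (simp add: poly_sum algebra_simps)
      moreover have "poly RQ s = (\<Sum>i\<le>n2. \<eta>' i * (t0 + \<beta> * T2 * s) ^ i)"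
        unfolding RQ_def by (simp add: poly_sum algebra_simps)
      ultimately show ?thesis by (simp add: algebra_simps)
    qed
    have "Cv M (X (t0 + \<beta> * T1 * \<tau>)) Y2 = Cv M Y2 (X (t0 + \<beta> * T1 * \<tau>))" by (rule Cv_comm)
    also have "\<dots> = (LINT s:{0..1}|lborel. p2 s * Cv M (X (t0 + \<beta> * T2 * s)) (X (t0 + \<beta> * T1 * \<tau>)))"
      by (rule G2(2))
    also have "\<dots> = poly RP \<tau> * cQ + (LINT s:{0..1}|lborel. (\<lambda>_. 0::real) s)"
      using lint_lin(2)[where H="\<lambda>_. 0", OF G2(1) intQ eq] unfolding cQ_def by simp
    finally show ?thesis by simp
  qed
  have eqo: "p1 \<tau> * Cv M (X (t0 + \<beta> * T1 * \<tau>)) Y2 = cQ * (p1 \<tau> * poly RP \<tau>) + 0"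
    if \<tau>: "\<tau> \<in> {0..1}" for \<tau>
    using inner[OF \<tau>] by (simp add: algebra_simps)
  have "Cv M Y1 Y2 = cQ * (LINT \<tau>:{0..1}|lborel. p1 \<tau> * poly RP \<tau>) + (LINT \<tau>:{0..1}|lborel. (\<lambda>_. 0::real) \<tau>)"
    using G1(2) lint_lin(2)[where H="\<lambda>_. 0", OF G1(1) intP eqo] by simp
  moreover have "cQ * (LINT \<tau>:{0..1}|lborel. p1 \<tau> * poly RP \<tau>) = 0"
  proof (cases "n2 \<le> n - 1")
    case True
    have "degree RQ < n" using True n deg_lin_sum_le[where m=n2 and c="\<eta>'" and u=t0 and v="\<beta> * T2"] unfolding RQ_def
      by (meson le_less_trans diff_less less_numeral_extra(1) order.trans less_le_trans)
    then have "cQ = 0" unfolding cQ_def p2_def by (rule kernel_poly(2)[OF k])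
    then show ?thesis by simp
  next
    case False
    then have "n1 \<le> n - 1" using mn by simp
    have "degree RP < n" using \<open>n1 \<le> n - 1\<close> n deg_lin_sum_le[where m=n1 and c="\<eta>" and u=t0 and v="\<beta> * T1"] unfolding RP_def
      by (meson le_less_trans diff_less less_numeral_extra(1) order.trans less_le_trans)
    then have "(LINT \<tau>:{0..1}|lborel. p1 \<tau> * poly RP \<tau>) = 0" unfolding p1_def by (rule kernel_poly(2)[OF k])
    then show ?thesis by simp
  qed
  ultimately show ?thesis by simp
qed



theorem theorem1:
  fixes M :: "'a measure" and X :: "real \<Rightarrow> 'a \<Rightarrow> real" and I :: "real set"
    and n N :: nat and \<beta> \<mu> \<kappa> \<xi> :: real
  assumes "prob_space M"
    and "open I" and "is_interval I" and "I \<noteq> {}" and "I \<subseteq> {0..}"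
    and "n \<ge> 1" and "\<beta> \<in> {-1, 1}" and "\<kappa> > -1" and "\<mu> > -1" and "N \<ge> n" and "\<xi> \<in> {0..1}"
    and "noise_C1 M X" and "noise_C2 M X I n"
  shows
    "(\<forall>T t0 t0' Y Y'. T > 0 \<and> t0 \<in> I \<and> t0 + \<beta> * T \<in> I \<and> t0' \<in> I \<and> t0' + \<beta> * T \<in> I \<and>
        jacobi_noise_error M X n N \<mu> \<kappa> \<xi> \<beta> T t0 Y \<and>
        jacobi_noise_error M X n N \<mu> \<kappa> \<xi> \<beta> T t0' Y' \<longrightarrow>
        Ex M Y = Ex M Y' \<and> Vr M Y = Vr M Y')
   \<and> (\<forall>T1 T2 t0 t0' Y1 Y2 Y1' Y2'. T1 > 0 \<and> T2 > 0 \<and>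
        t0 \<in> I \<and> t0 + \<beta> * T1 \<in> I \<and> t0 + \<beta> * T2 \<in> I \<and>
        t0' \<in> I \<and> t0' + \<beta> * T1 \<in> I \<and> t0' + \<beta> * T2 \<in> I \<and>
        jacobi_noise_error M X n N \<mu> \<kappa> \<xi> \<beta> T1 t0 Y1 \<and>
        jacobi_noise_error M X n N \<mu> \<kappa> \<xi> \<beta> T2 t0 Y2 \<and>
        jacobi_noise_error M X n N \<mu> \<kappa> \<xi> \<beta> T1 t0' Y1' \<and>
        jacobi_noise_error M X n N \<mu> \<kappa> \<xi> \<beta> T2 t0' Y2' \<longrightarrow>
        Cv M Y1 Y2 = Cv M Y1' Y2')
   \<and> (noise_C3 M X I n \<longrightarrow>
        (\<forall>T t0 Y. T > 0 \<and> t0 \<in> I \<and> t0 + \<beta> * T \<in> I \<and>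
            jacobi_noise_error M X n N \<mu> \<kappa> \<xi> \<beta> T t0 Y \<longrightarrow>
            Ex M Y = 0 \<and> Vr M Y = 0)
      \<and> (\<forall>T1 T2 t0 Y1 Y2. T1 > 0 \<and> T2 > 0 \<and>
            t0 \<in> I \<and> t0 + \<beta> * T1 \<in> I \<and> t0 + \<beta> * T2 \<in> I \<and>
            jacobi_noise_error M X n N \<mu> \<kappa> \<xi> \<beta> T1 t0 Y1 \<and>
            jacobi_noise_error M X n N \<mu> \<kappa> \<xi> \<beta> T2 t0 Y2 \<longrightarrow>
            Cv M Y1 Y2 = 0))"
proof -
  note P = assms(1) and iv = assms(3) and I0 = assms(5) and n = assms(6) and k = assms(8,9)
    and C1 = assms(12) and C2 = assms(13)
  define V where "V T1 T2 = (LINT \<tau>:{0..1}|lborel. jac_kernel n N \<mu> \<kappa> \<xi> (\<beta> * T1) \<tau> *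
            (LINT s:{0..1}|lborel. jac_kernel n N \<mu> \<kappa> \<xi> (\<beta> * T2) s * Cv M (X (\<beta> * T2 * s)) (X (\<beta> * T1 * \<tau>))))" for T1 T2
  have covV: "Cv M Y1 Y2 = V T1 T2" if "t0 \<in> I" "t0 + \<beta> * T1 \<in> I" "t0 + \<beta> * T2 \<in> I"
    "jacobi_noise_error M X n N \<mu> \<kappa> \<xi> \<beta> T1 t0 Y1" "jacobi_noise_error M X n N \<mu> \<kappa> \<xi> \<beta> T2 t0 Y2"
    for T1 T2 t0 Y1 Y2
    unfolding V_def by (rule cov_C2[OF P C1 C2 iv I0 n k that])
  have cov3: "Cv M Y1 Y2 = 0" if "noise_C3 M X I n" "t0 \<in> I" "t0 + \<beta> * T1 \<in> I" "t0 + \<beta> * T2 \<in> I"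
    "jacobi_noise_error M X n N \<mu> \<kappa> \<xi> \<beta> T1 t0 Y1" "jacobi_noise_error M X n N \<mu> \<kappa> \<xi> \<beta> T2 t0 Y2"
    for T1 T2 t0 Y1 Y2
    by (rule cov_C3[OF P C1 that(1) iv I0 n k that(2-)])
  have A: "Ex M Y = Ex M Y' \<and> Vr M Y = Vr M Y'"
    if h: "T > 0 \<and> t0 \<in> I \<and> t0 + \<beta> * T \<in> I \<and> t0' \<in> I \<and> t0' + \<beta> * T \<in> I \<and>
        jacobi_noise_error M X n N \<mu> \<kappa> \<xi> \<beta> T t0 Y \<and>
        jacobi_noise_error M X n N \<mu> \<kappa> \<xi> \<beta> T t0' Y'" for T t0 t0' Y Y'
  proof (rule conjI)
    show "Ex M Y = Ex M Y'"
      using h mean_C2[OF P C1 C2 iv I0 n k] by blast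
  next
    show "Vr M Y = Vr M Y'"
      unfolding Vr_def using h covV[of t0 T T Y Y] covV[of t0' T T Y' Y'] by simp
  qed
  have B: "Cv M Y1 Y2 = Cv M Y1' Y2'"
    if h: "T1 > 0 \<and> T2 > 0 \<and>
        t0 \<in> I \<and> t0 + \<beta> * T1 \<in> I \<and> t0 + \<beta> * T2 \<in> I \<and>
        t0' \<in> I \<and> t0' + \<beta> * T1 \<in> I \<and> t0' + \<beta> * T2 \<in> I \<and>
        jacobi_noise_error M X n N \<mu> \<kappa> \<xi> \<beta> T1 t0 Y1 \<and>
        jacobi_noise_error M X n N \<mu> \<kappa> \<xi> \<beta> T2 t0 Y2 \<and>
        jacobi_noise_error M X n N \<mu> \<kappa> \<xi> \<beta> T1 t0' Y1' \<and>
        jacobi_noise_error M X n N \<mu> \<kappa> \<xi> \<beta> T2 t0' Y2'" for T1 T2 t0 t0' Y1 Y2 Y1' Y2'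
    using h covV[of t0 T1 T2 Y1 Y2] covV[of t0' T1 T2 Y1' Y2'] by simp
  have C: "Ex M Y = 0 \<and> Vr M Y = 0"
    if C3: "noise_C3 M X I n" and h: "T > 0 \<and> t0 \<in> I \<and> t0 + \<beta> * T \<in> I \<and>
            jacobi_noise_error M X n N \<mu> \<kappa> \<xi> \<beta> T t0 Y" for T t0 Y
  proof
    show "Ex M Y = 0" using h mean_C3[OF P C3 iv n k] by blast
    show "Vr M Y = 0" unfolding Vr_def
      using h C3 cov3[of t0 T T Y Y] by simp
  qed
  have D: "Cv M Y1 Y2 = 0"
    if C3: "noise_C3 M X I n" and h: "T1 > 0 \<and> T2 > 0 \<and>
            t0 \<in> I \<and> t0 + \<beta> * T1 \<in> I \<and> t0 + \<beta> * T2 \<in> I \<and>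
            jacobi_noise_error M X n N \<mu> \<kappa> \<xi> \<beta> T1 t0 Y1 \<and>
            jacobi_noise_error M X n N \<mu> \<kappa> \<xi> \<beta> T2 t0 Y2" for T1 T2 t0 Y1 Y2
    using h C3 cov3[of t0 T1 T2 Y1 Y2] by simp
  show ?thesis
    apply (intro conjI allI impI)
    subgoal using A by blast
    subgoal using A by blast
    subgoal using B by blast
    subgoal using C by blast
    subgoal using C by blast
    subgoal using D by blast
    done
qed

end
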